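(* Assign to the edges of the $\mathbb{Z}^2$ nearest-neighbour lattice i.i.d. weights $(\omega_e)$ with distribution $F$ supported on $[0,\infty)$, with $r:=\inf\{x\ge0:F(x)>0\}$, satisfying $F(0)<1/2$ and $F(r)<\vec p_c$ (the critical probability of oriented bond percolation on $\mathbb{Z}^2$). Let $\delta>0$ be fixed such that, for every $m\ge2$ and $z$, $\mathbb{P}(A_{L,m}(z))\to1$ as $L\to\infty$. Then for every $m\ge2$ and all sufficiently large integers $L\ge1$ there exist constants $\theta,\gamma>0$ and $C<\infty$ such that for all $x,y\in\mathbb{Z}^2$, $$\mathbb{P}\big(\exists\text{ a nearest-neighbour path from $x$ to $y$ visiting at most }\theta\|y-x\|\text{ tiles }B(z,L),\,z\in V_L,\text{ for which }A_{L,m}(z)\text{ occurs}\big)<C\exp(-\gamma\|y-x\|).$$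
   Context: $\|\cdot\|$ is the $\ell^1$-norm. For an integer $L\ge1$, $B(z,L):=\{x:\|x-z\|\le L\}$ and $V_L:=\{(2iL+jL,\,jL):i,j\in\mathbb{Z}\}$; the balls $B(z,L)$, $z\in V_L$, are called tiles, and a path visits a tile if it contains a vertex of it. For $m\ge2$ and $z\in V_L$, $A_{L,m}(z)$ is the event that every path connecting $B(z,L)$ to $\partial B(z,mL)$ has total weight $\sum_{e}\omega_e$ at least $(m-1)L(r+\delta)$. (Under the stated assumptions on $F$, such a $\delta>0$ exists.) *)

theory Defs
  imports "HOL-Probability.Probability"
begin

type_synonym vtx = "int \<times> int"
(* the edge {u, u+(1,0)} is (u, False); the edge {u, u+(0,1)} is (u, True) *)
type_synonym edge = "vtx \<times> bool"

definition l1dist :: "vtx \<Rightarrow> vtx \<Rightarrow> int" where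
  "l1dist x y = \<bar>fst x - fst y\<bar> + \<bar>snd x - snd y\<bar>"

definition nn_path :: "vtx list \<Rightarrow> bool" where
  "nn_path p \<longleftrightarrow> p \<noteq> [] \<and> (\<forall>i. Suc i < length p \<longrightarrow> l1dist (p!i) (p!Suc i) = 1)"

definition nn_edge :: "vtx \<Rightarrow> vtx \<Rightarrow> edge" where
  "nn_edge u v =
     (if snd u = snd v then (if fst u \<le> fst v then (u, False) else (v, False))
      else (if snd u \<le> snd v then (u, True) else (v, True)))"

definition path_weight :: "(edge \<Rightarrow> real) \<Rightarrow> vtx list \<Rightarrow> real" where
  "path_weight \<omega> p = (\<Sum>i<length p - 1. \<omega> (nn_edge (p!i) (p!Suc i)))"

definition ballL :: "vtx \<Rightarrow> int \<Rightarrow> vtx set" where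
  "ballL z L = {x. l1dist x z \<le> L}"

definition bdryL :: "vtx \<Rightarrow> int \<Rightarrow> vtx set" where
  "bdryL z L = {x. l1dist x z = L}"

definition tiles :: "nat \<Rightarrow> vtx set" where
  "tiles L = {(2*i*int L + j*int L, j*int L) | i j. True}"

definition visits :: "vtx list \<Rightarrow> vtx \<Rightarrow> nat \<Rightarrow> bool" where
  "visits p z L \<longleftrightarrow> (\<exists>v\<in>set p. v \<in> ballL z (int L))"

definition A_event :: "real \<Rightarrow> real \<Rightarrow> nat \<Rightarrow> nat \<Rightarrow> vtx \<Rightarrow> (edge \<Rightarrow> real) \<Rightarrow> bool" where
  "A_event r \<delta> L m z \<omega> \<longleftrightarrow>
     (\<forall>p. nn_path p \<and> hd p \<in> ballL z (int L) \<and> last p \<in> bdryL z (int m * int L) \<longrightarrow>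
        path_weight \<omega> p \<ge> (real m - 1) * real L * (r + \<delta>))"

definition weights :: "real measure \<Rightarrow> (edge \<Rightarrow> real) measure" where
  "weights \<mu> = PiM UNIV (\<lambda>_. \<mu>)"

definition Fdist :: "real measure \<Rightarrow> real \<Rightarrow> real" where
  "Fdist \<mu> x = measure \<mu> {..x}"

definition r_min :: "real measure \<Rightarrow> real" where
  "r_min \<mu> = Inf {x. x \<ge> 0 \<and> Fdist \<mu> x > 0}"

definition bern_field :: "real \<Rightarrow> (edge \<Rightarrow> bool) measure" where
  "bern_field p = PiM UNIV (\<lambda>_. measure_pmf (bernoulli_pmf p))"

definition oriented_cluster :: "(edge \<Rightarrow> bool) \<Rightarrow> vtx set" where
  "oriented_cluster \<eta> = {v. \<exists>q. q \<noteq> [] \<and> hd q = (0,0) \<and> last q = v \<and>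
      (\<forall>i. Suc i < length q \<longrightarrow>
         (q!Suc i = (fst (q!i) + 1, snd (q!i)) \<and> \<eta> (q!i, False)) \<or>
         (q!Suc i = (fst (q!i), snd (q!i) + 1) \<and> \<eta> (q!i, True)))}"

definition theta_or :: "real \<Rightarrow> real" where
  "theta_or p = measure (bern_field p) {\<eta> \<in> space (bern_field p). infinite (oriented_cluster \<eta>)}"

definition pc_oriented :: real where
  "pc_oriented = Sup {p. 0 \<le> p \<and> p \<le> 1 \<and> theta_or p = 0}"

end

theory Submission
  imports Defs
begin


definition ta :: "nat \<Rightarrow> vtx \<Rightarrow> int \<times> int" where
  "ta L v = ((fst v + snd v + int L) div (2 * int L), (fst v - snd v + int L) div (2 * int L))"

definition center :: "nat \<Rightarrow> int \<times> int \<Rightarrow> vtx" where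
  "center L t = (int L * (fst t + snd t), int L * (fst t - snd t))"

definition king_adj :: "int \<times> int \<Rightarrow> int \<times> int \<Rightarrow> bool" where
  "king_adj s t \<longleftrightarrow> \<bar>fst s - fst t\<bar> \<le> 1 \<and> \<bar>snd s - snd t\<bar> \<le> 1"

definition kd :: "int \<times> int \<Rightarrow> int \<times> int \<Rightarrow> int" where
  "kd s t = max \<bar>fst s - fst t\<bar> \<bar>snd s - snd t\<bar>"

lemma abs_sum_max: "\<bar>p\<bar> + \<bar>q\<bar> = max \<bar>p + q\<bar> \<bar>p - (q::int)\<bar>"
  by (simp add: abs_if max_def)

lemma l1dist_rot: "l1dist x y = max \<bar>(fst x + snd x) - (fst y + snd y)\<bar> \<bar>(fst x - snd x) - (fst y - snd y)\<bar>"
  unfolding l1dist_def using abs_sum_max[of "fst x - fst y" "snd x - snd y"]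
  by (simp add: algebra_simps)

lemma div_bounds:
  fixes u :: int and L :: int assumes "L \<ge> 1"
  shows "2*L*((u + L) div (2*L)) \<le> u + L" "u + L < 2*L*((u + L) div (2*L)) + 2*L"
proof -
  have p: "2*L > 0" using assms by simp
  have e: "u + L = 2*L*((u + L) div (2*L)) + (u+L) mod (2*L)" by simp
  have "0 \<le> (u+L) mod (2*L)" "(u+L) mod (2*L) < 2*L" using p by auto
  then show "2*L*((u + L) div (2*L)) \<le> u + L" "u + L < 2*L*((u + L) div (2*L)) + 2*L"
    using e by linarith+
qed

lemma in_tile:
  assumes "L \<ge> 1"
  shows "v \<in> ballL (center L (ta L v)) (int L)"
proof -
  let ?u = "fst v + snd v" and ?w = "fst v - snd v"
  let ?a = "(?u + int L) div (2 * int L)" and ?b = "(?w + int L) div (2 * int L)"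
  have L: "int L \<ge> 1" using assms by simp
  note A = div_bounds[OF L, of ?u] and B = div_bounds[OF L, of ?w]
  have "l1dist v (center L (ta L v)) = max \<bar>?u - 2 * int L * ?a\<bar> \<bar>?w - 2 * int L * ?b\<bar>"
    unfolding l1dist_rot center_def ta_def by (simp add: algebra_simps)
  also have "\<dots> \<le> int L" using A B by (simp add: abs_le_iff)
  finally show ?thesis unfolding ballL_def by simp
qed

lemma center_tiles: "center L t \<in> tiles L"
  unfolding center_def tiles_def
  by (rule CollectI, rule exI[of _ "snd t"], rule exI[of _ "fst t - snd t"]) (simp add: algebra_simps)

lemma center_inj: "L \<ge> 1 \<Longrightarrow> inj (center L)"
proof (rule injI)
  fix s t assume L: "L \<ge> 1" and e: "center L s = center L t"
  then have "int L * (fst s + snd s) = int L * (fst t + snd t)" "int L * (fst s - snd s) = int L * (fst t - snd t)"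
    unfolding center_def by auto
  then have "fst s + snd s = fst t + snd t" "fst s - snd s = fst t - snd t" using L by auto
  then show "s = t" by (simp add: prod_eq_iff)
qed

lemma div_step:
  fixes x :: int and k :: int assumes "k \<ge> 1" "\<bar>x - y\<bar> \<le> 1"
  shows "\<bar>x div k - y div k\<bar> \<le> 1"
proof -
  have m1: "x div k \<le> y div k + 1" if "x \<le> y + 1" for x y :: int
  proof -
    have "x div k \<le> (y + 1) div k" using that assms by (simp add: zdiv_mono1)
    also have "(y+1) div k \<le> y div k + 1"
    proof -
      have k: "k > 0" using assms by simp
      have e: "y = k*(y div k) + y mod k" by simp
      have "y mod k < k" using k by simp
      then have "y + 1 \<le> k * (y div k) + k" using e by linarith
      then have "y + 1 \<le> k * (y div k + 1)" by (simp add: algebra_simps)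
      then have "(y+1) div k \<le> (k * (y div k + 1)) div k" using zdiv_mono1 k by blast
      also have "\<dots> = y div k + 1" using k by simp
      finally show ?thesis .
    qed
    finally show ?thesis .
  qed
  show ?thesis using m1[of x y] m1[of y x] assms by (simp add: abs_le_iff)
qed

lemma adj_tiles:
  assumes "L \<ge> 1" "l1dist u v = 1"
  shows "king_adj (ta L u) (ta L v)"
proof -
  have L: "2 * int L \<ge> 1" using assms by simp
  have h: "max \<bar>(fst u + snd u) - (fst v + snd v)\<bar> \<bar>(fst u - snd u) - (fst v - snd v)\<bar> = 1"
    using assms(2) l1dist_rot by simp
  show ?thesis unfolding king_adj_def ta_def using h
    by (auto intro!: div_step[OF L])
qed

lemma dist_tiles:
  assumes "L \<ge> 1"
  shows "l1dist x y \<le> 2 * int L * kd (ta L x) (ta L y) + 2 * int L"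
proof -
  have L: "int L \<ge> 1" using assms by simp
  let ?ux = "fst x + snd x" and ?wx = "fst x - snd x"
  let ?uy = "fst y + snd y" and ?wy = "fst y - snd y"
  note A1 = div_bounds[OF L, of ?ux] and A2 = div_bounds[OF L, of ?uy]
  note B1 = div_bounds[OF L, of ?wx] and B2 = div_bounds[OF L, of ?wy]
  let ?a1 = "(?ux + int L) div (2 * int L)" and ?a2 = "(?uy + int L) div (2 * int L)"
  let ?b1 = "(?wx + int L) div (2 * int L)" and ?b2 = "(?wy + int L) div (2 * int L)"
  have ka: "2 * int L * \<bar>?a1 - ?a2\<bar> \<le> 2 * int L * kd (ta L x) (ta L y)"
    and kb: "2 * int L * \<bar>?b1 - ?b2\<bar> \<le> 2 * int L * kd (ta L x) (ta L y)"
    unfolding kd_def ta_def by (auto intro: mult_left_mono)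
  have e1: "2 * int L * \<bar>?a1 - ?a2\<bar> = \<bar>2 * int L * ?a1 - 2 * int L * ?a2\<bar>"
    by (simp add: abs_mult right_diff_distrib[symmetric])
  have e2: "2 * int L * \<bar>?b1 - ?b2\<bar> = \<bar>2 * int L * ?b1 - 2 * int L * ?b2\<bar>"
    by (simp add: abs_mult right_diff_distrib[symmetric])
  have "\<bar>?ux - ?uy\<bar> \<le> 2 * int L * kd (ta L x) (ta L y) + 2 * int L"
    using ka e1 A1 A2 by (simp add: abs_le_iff)
  moreover have "\<bar>?wx - ?wy\<bar> \<le> 2 * int L * kd (ta L x) (ta L y) + 2 * int L"
    using kb e2 B1 B2 by (simp add: abs_le_iff)
  ultimately show ?thesis unfolding l1dist_rot by simp
qed



lemma nn_path_chain:
  assumes "L \<ge> 1" "nn_path p"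
  shows "successively king_adj (map (ta L) p)"
  using assms unfolding successively_conv_nth nn_path_def by (auto intro: adj_tiles)

lemma kd_tri: "kd a c \<le> kd a b + kd b c"
proof -
  have 1: "\<bar>fst a - fst c\<bar> \<le> \<bar>fst a - fst b\<bar> + \<bar>fst b - fst c\<bar>" by arith
  have 2: "\<bar>snd a - snd c\<bar> \<le> \<bar>snd a - snd b\<bar> + \<bar>snd b - snd c\<bar>" by arith
  have "\<bar>fst a - fst b\<bar> \<le> kd a b" "\<bar>snd a - snd b\<bar> \<le> kd a b"
    "\<bar>fst b - fst c\<bar> \<le> kd b c" "\<bar>snd b - snd c\<bar> \<le> kd b c" unfolding kd_def by auto
  then show ?thesis using 1 2 unfolding kd_def[of a c] by linarith
qed

lemma kd_adj: "king_adj a b \<Longrightarrow> kd a b \<le> 1"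
  unfolding kd_def king_adj_def by simp

lemma kd_self: "kd a a = 0" unfolding kd_def by simp

lemma kd_chain:
  "successively king_adj w \<Longrightarrow> w \<noteq> [] \<Longrightarrow> kd (hd w) (last w) \<le> int (length w) - 1"
proof (induction w)
  case Nil then show ?case by simp
next
  case (Cons a w)
  show ?case
  proof (cases "w = []")
    case True then show ?thesis by (simp add: kd_self)
  next
    case False
    have adj: "king_adj a (hd w)" and sw: "successively king_adj w"
      using Cons.prems False by (auto simp: successively_Cons)
    have "kd a (last w) \<le> kd a (hd w) + kd (hd w) (last w)" by (rule kd_tri)
    also have "\<dots> \<le> 1 + (int (length w) - 1)" using kd_adj[OF adj] Cons.IH[OF sw False] by simp
    finally show ?thesis using False by simp
  qed
qed

lemma shortest_chain:
  assumes "successively R w0" "w0 \<noteq> []"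
  shows "\<exists>w. successively R w \<and> w \<noteq> [] \<and> hd w = hd w0 \<and> last w = last w0 \<and> set w \<subseteq> set w0 \<and> distinct w"
  using assms
proof (induction "length w0" arbitrary: w0 rule: less_induct)
  case less
  show ?case
  proof (cases "distinct w0")
    case True then show ?thesis using less.prems by blast
  next
    case False
    then obtain xs ys zs y where w0: "w0 = xs@[y]@ys@[y]@zs" using not_distinct_decomp by blast
    let ?w1 = "xs@[y]@zs"
    have s1: "successively R ?w1" using less.prems(1) unfolding w0
      by (auto simp: successively_append_iff successively_Cons)
    have l: "length ?w1 < length w0" unfolding w0 by simp
    have h: "hd ?w1 = hd w0" unfolding w0 by (cases xs) auto
    have la: "last ?w1 = last w0" unfolding w0 by (cases zs) auto
    have st: "set ?w1 \<subseteq> set w0" unfolding w0 by auto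
    from less.hyps[OF l s1] obtain w where "successively R w \<and> w \<noteq> [] \<and> hd w = hd ?w1 \<and> last w = last ?w1 \<and> set w \<subseteq> set ?w1 \<and> distinct w"
      by auto
    then show ?thesis using h la st by auto
  qed
qed

lemma successively_take: "successively R w \<Longrightarrow> successively R (take n w)"
  using successively_append_iff[of R "take n w" "drop n w"] by simp

fun build :: "int \<times> int \<Rightarrow> (int \<times> int) list \<Rightarrow> (int \<times> int) list" where
  "build s [] = [s]"
| "build s (d # ds) = s # build (fst s + fst d, snd s + snd d) ds"

fun difs :: "(int \<times> int) list \<Rightarrow> (int \<times> int) list" where
  "difs (a # b # ws) = (fst b - fst a, snd b - snd a) # difs (b # ws)"
| "difs _ = []"

definition S9 :: "(int \<times> int) set" where
  "S9 = {-1,0,1} \<times> {-1,0,1}"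

lemma card_S9: "card S9 = 9" and finite_S9: "finite S9"
  unfolding S9_def by (simp_all add: card_cartesian_product)

lemma abs_le1: "\<bar>x::int\<bar> \<le> 1 \<Longrightarrow> x \<in> {-1,0,1}"
  by (cases "x < 0"; cases "x = 0"; simp; arith)

lemma build_difs:
  "w \<noteq> [] \<Longrightarrow> successively king_adj w \<Longrightarrow>
     build (hd w) (difs w) = w \<and> set (difs w) \<subseteq> S9 \<and> length (difs w) = length w - 1"
proof (induction w rule: difs.induct)
  case (1 a b ws)
  have adj: "king_adj a b" and sw: "successively king_adj (b # ws)" using "1.prems" by auto
  have "\<bar>fst b - fst a\<bar> \<le> 1" "\<bar>snd b - snd a\<bar> \<le> 1" using adj unfolding king_adj_def by (simp_all add: abs_minus_commute)
  then have "(fst b - fst a, snd b - snd a) \<in> S9" unfolding S9_def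
    by (intro SigmaI abs_le1)
  then show ?case using "1.IH"[OF _ sw] by simp
next
  case "2_1" then show ?case by simp
next
  case ("2_2" v) then show ?case by simp
qed

lemma card_chains:
  assumes "n \<ge> 1"
  shows "finite {w. length w = n \<and> hd w = s \<and> successively king_adj w}"
    "card {w. length w = n \<and> hd w = s \<and> successively king_adj w} \<le> 9 ^ (n - 1)"
proof -
  let ?W = "{w. length w = n \<and> hd w = s \<and> successively king_adj w}"
  let ?D = "{ds. set ds \<subseteq> S9 \<and> length ds = n - 1}"
  have sub: "?W \<subseteq> build s ` ?D"
  proof
    fix w assume "w \<in> ?W"
    then have w: "length w = n" "hd w = s" "successively king_adj w" by auto
    then have "w \<noteq> []" using assms by auto
    from build_difs[OF this w(3)] w have "w = build s (difs w)" "difs w \<in> ?D" by auto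
    then show "w \<in> build s ` ?D" by (rule image_eqI)
  qed
  have fD: "finite ?D" using finite_lists_length_eq[OF finite_S9] by simp
  show "finite ?W" using sub fD finite_subset by blast
  have "card ?W \<le> card (build s ` ?D)" using sub fD by (intro card_mono) auto
  also have "\<dots> \<le> card ?D" using card_image_le fD by blast
  also have "\<dots> = 9 ^ (n - 1)" using card_lists_length_eq[OF finite_S9] card_S9 by simp
  finally show "card ?W \<le> 9 ^ (n - 1)" .
qed



definition Eloc :: "int \<Rightarrow> vtx \<Rightarrow> edge set" where
  "Eloc R z = {nn_edge u v | u v. u \<in> ballL z R \<and> v \<in> ballL z R \<and> l1dist u v = 1}"

definition Aloc :: "real \<Rightarrow> int \<Rightarrow> int \<Rightarrow> vtx \<Rightarrow> (edge \<Rightarrow> real) \<Rightarrow> bool" where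
  "Aloc c L R z \<omega> \<longleftrightarrow> (\<forall>p. nn_path p \<and> set p \<subseteq> ballL z R \<and> hd p \<in> ballL z L \<and> last p \<in> bdryL z R
      \<longrightarrow> c \<le> path_weight \<omega> p)"

lemma l1dist_sym: "l1dist a b = l1dist b a"
  unfolding l1dist_def by (simp add: abs_minus_commute)

lemma l1dist_tri: "l1dist a c \<le> l1dist a b + l1dist b c"
  unfolding l1dist_def by arith

lemma A_imp_Aloc:
  "A_event r \<delta> L m z \<omega> \<Longrightarrow> Aloc ((real m - 1) * real L * (r + \<delta>)) (int L) (int m * int L) z \<omega>"
  unfolding A_event_def Aloc_def by blast

lemma path_prefix:
  assumes nn: "\<forall>e. \<omega> e \<ge> 0" and p: "nn_path p" and h: "hd p \<in> ballL z L" and l: "last p \<in> bdryL z R"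
    and LR: "L < R"
  shows "\<exists>p'. nn_path p' \<and> set p' \<subseteq> ballL z R \<and> hd p' = hd p \<and> last p' \<in> bdryL z R \<and>
     path_weight \<omega> p' \<le> path_weight \<omega> p"
proof -
  have ne: "p \<noteq> []" using p unfolding nn_path_def by simp
  let ?P = "\<lambda>i. i < length p \<and> l1dist (p!i) z = R"
  have ex: "?P (length p - 1)" using l ne unfolding bdryL_def by (simp add: last_conv_nth)
  define i where "i = (LEAST i. ?P i)"
  have Pi: "?P i" unfolding i_def by (rule LeastI[of ?P, OF ex])
  have imin: "\<not> ?P j" if "j < i" for j using that not_less_Least unfolding i_def by blast
  have lt: "l1dist (p!j) z < R" if "j < i" for j
    using that
  proof (induction j)
    case 0
    have "l1dist (p!0) z \<le> L" using h ne unfolding ballL_def by (simp add: hd_conv_nth)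
    then show ?case using LR by simp
  next
    case (Suc j)
    have "Suc j < length p" using Suc.prems Pi by simp
    then have "l1dist (p!j) (p!Suc j) = 1" using p unfolding nn_path_def by blast
    then have "l1dist (p!Suc j) z \<le> l1dist (p!j) z + 1"
      using l1dist_tri[of "p!Suc j" z "p!j"] l1dist_sym[of "p!j" "p!Suc j"] by linarith
    moreover have "l1dist (p!j) z < R" using Suc by simp
    moreover have "l1dist (p!Suc j) z \<noteq> R" using imin[OF Suc.prems] \<open>Suc j < length p\<close> by blast
    ultimately show ?case by simp
  qed
  define p' where "p' = take (Suc i) p"
  have len: "length p' = Suc i" unfolding p'_def using Pi by simp
  have nth': "p'!j = p!j" if "j \<le> i" for j unfolding p'_def using that by simp
  have "nn_path p'" unfolding nn_path_def
  proof (intro conjI allI impI)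
    show "p' \<noteq> []" using len by auto
    fix j assume "Suc j < length p'"
    then show "l1dist (p'!j) (p'!Suc j) = 1" using p len nth' Pi unfolding nn_path_def by simp
  qed
  moreover have "set p' \<subseteq> ballL z R"
  proof
    fix v assume "v \<in> set p'"
    then obtain j where j: "j < length p'" "v = p'!j" by (auto simp: in_set_conv_nth)
    then have "j \<le> i" using len by simp
    have "l1dist (p!j) z \<le> R"
    proof (cases "j < i")
      case True then show ?thesis using lt[OF True] by simp
    next
      case False then have "j = i" using \<open>j \<le> i\<close> by simp
      then show ?thesis using Pi by simp
    qed
    then show "v \<in> ballL z R" using j nth' \<open>j \<le> i\<close> unfolding ballL_def by simp
  qed
  moreover have "hd p' = hd p" unfolding p'_def using ne by simp
  moreover have "last p' \<in> bdryL z R"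
  proof -
    have "p' \<noteq> []" using len by auto
    then have "last p' = p'!i" using len by (simp add: last_conv_nth)
    then show ?thesis using Pi nth'[of i] unfolding bdryL_def by simp
  qed
  moreover have "path_weight \<omega> p' \<le> path_weight \<omega> p"
  proof -
    have "path_weight \<omega> p' = (\<Sum>k<i. \<omega> (nn_edge (p!k) (p!Suc k)))"
      unfolding path_weight_def len using nth' by (intro sum.cong) auto
    also have "\<dots> \<le> (\<Sum>k<length p - 1. \<omega> (nn_edge (p!k) (p!Suc k)))"
      using Pi by (intro sum_mono2) (auto simp: nn[rule_format])
    finally show ?thesis unfolding path_weight_def .
  qed
  ultimately show ?thesis by blast
qed

lemma Aloc_imp_A:
  assumes nn: "\<forall>e. \<omega> e \<ge> 0" and m: "m \<ge> 2" and L: "L \<ge> 1"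
    and A: "Aloc ((real m - 1) * real L * (r + \<delta>)) (int L) (int m * int L) z \<omega>"
  shows "A_event r \<delta> L m z \<omega>"
  unfolding A_event_def
proof (intro allI impI)
  fix p assume H: "nn_path p \<and> hd p \<in> ballL z (int L) \<and> last p \<in> bdryL z (int m * int L)"
  have LR: "int L < int m * int L" using m L by simp
  obtain p' where p': "nn_path p'" "set p' \<subseteq> ballL z (int m * int L)" "hd p' = hd p"
    "last p' \<in> bdryL z (int m * int L)" "path_weight \<omega> p' \<le> path_weight \<omega> p"
    using path_prefix[OF nn _ _ _ LR] H by blast
  then have "(real m - 1) * real L * (r + \<delta>) \<le> path_weight \<omega> p'"
    using A H unfolding Aloc_def by auto
  then show "(real m - 1) * real L * (r + \<delta>) \<le> path_weight \<omega> p" using p'(5) by simp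
qed

lemma nn_edge_in_Eloc:
  assumes "nn_path p" "set p \<subseteq> ballL z R" "Suc k < length p"
  shows "nn_edge (p!k) (p!Suc k) \<in> Eloc R z"
proof -
  have "p!k \<in> set p" "p!Suc k \<in> set p" using assms(3) by auto
  moreover have "l1dist (p!k) (p!Suc k) = 1" using assms(1,3) unfolding nn_path_def by blast
  ultimately show ?thesis using assms(2) unfolding Eloc_def by blast
qed

lemma path_weight_restrict:
  assumes "nn_path p" "set p \<subseteq> ballL z R"
  shows "path_weight (restrict \<omega> (Eloc R z)) p = path_weight \<omega> p"
  unfolding path_weight_def using nn_edge_in_Eloc[OF assms] by (intro sum.cong) auto

lemma Aloc_restrict:
  "Aloc c L R z (restrict \<omega> (Eloc R z)) \<longleftrightarrow> Aloc c L R z \<omega>"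
  unfolding Aloc_def using path_weight_restrict by metis

lemma nn_edge_base: "fst (nn_edge u v) \<in> {u, v}"
  unfolding nn_edge_def by auto

lemma Eloc_base: "e \<in> Eloc R z \<Longrightarrow> fst e \<in> ballL z R"
proof -
  assume "e \<in> Eloc R z"
  then obtain u v where "e = nn_edge u v" "u \<in> ballL z R" "v \<in> ballL z R" unfolding Eloc_def by blast
  then show ?thesis using nn_edge_base[of u v] by auto
qed

definition tr :: "vtx \<Rightarrow> vtx \<Rightarrow> vtx" where
  "tr z u = (fst u + fst z, snd u + snd z)"

definition shiftw :: "vtx \<Rightarrow> (edge \<Rightarrow> real) \<Rightarrow> edge \<Rightarrow> real" where
  "shiftw z \<omega> e = \<omega> (tr z (fst e), snd e)"

lemma l1dist_tr: "l1dist (tr z u) (tr z v) = l1dist u v"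
  unfolding l1dist_def tr_def by simp

lemma nn_edge_tr: "nn_edge (tr z u) (tr z v) = (tr z (fst (nn_edge u v)), snd (nn_edge u v))"
  unfolding nn_edge_def tr_def by auto

lemma nn_path_tr: "nn_path (map (tr z) p) \<longleftrightarrow> nn_path p"
  unfolding nn_path_def by (simp add: l1dist_tr)

lemma path_weight_tr: "path_weight \<omega> (map (tr z) p) = path_weight (shiftw z \<omega>) p"
  unfolding path_weight_def shiftw_def by (intro sum.cong) (auto simp: nn_edge_tr)

lemma tr_ball: "tr z u \<in> ballL z R \<longleftrightarrow> u \<in> ballL (0,0) R"
  unfolding ballL_def l1dist_def tr_def by simp

lemma tr_bdry: "tr z u \<in> bdryL z R \<longleftrightarrow> u \<in> bdryL (0,0) R"
  unfolding bdryL_def l1dist_def tr_def by simp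

lemma tr_inv: "tr z (tr (- fst z, - snd z) u) = u"
  unfolding tr_def by simp

lemma A_shift: "A_event r \<delta> L m z \<omega> \<longleftrightarrow> A_event r \<delta> L m (0,0) (shiftw z \<omega>)"
proof
  assume A: "A_event r \<delta> L m z \<omega>"
  show "A_event r \<delta> L m (0,0) (shiftw z \<omega>)" unfolding A_event_def
  proof (intro allI impI)
    fix p assume H: "nn_path p \<and> hd p \<in> ballL (0,0) (int L) \<and> last p \<in> bdryL (0,0) (int m * int L)"
    then have ne: "p \<noteq> []" unfolding nn_path_def by simp
    have "nn_path (map (tr z) p) \<and> hd (map (tr z) p) \<in> ballL z (int L) \<and> last (map (tr z) p) \<in> bdryL z (int m * int L)"
      using H ne by (simp add: nn_path_tr hd_map last_map tr_ball tr_bdry)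
    then have "(real m - 1) * real L * (r + \<delta>) \<le> path_weight \<omega> (map (tr z) p)"
      using A unfolding A_event_def by blast
    then show "(real m - 1) * real L * (r + \<delta>) \<le> path_weight (shiftw z \<omega>) p"
      by (simp add: path_weight_tr)
  qed
next
  assume A: "A_event r \<delta> L m (0,0) (shiftw z \<omega>)"
  show "A_event r \<delta> L m z \<omega>" unfolding A_event_def
  proof (intro allI impI)
    fix p assume H: "nn_path p \<and> hd p \<in> ballL z (int L) \<and> last p \<in> bdryL z (int m * int L)"
    then have ne: "p \<noteq> []" unfolding nn_path_def by simp
    let ?q = "map (tr (- fst z, - snd z)) p"
    have pq: "map (tr z) ?q = p" by (simp add: tr_inv map_idI)
    have "nn_path (map (tr z) ?q) \<and> hd (map (tr z) ?q) \<in> ballL z (int L) \<and> last (map (tr z) ?q) \<in> bdryL z (int m * int L)"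
      using H pq by simp
    then have "nn_path ?q \<and> hd ?q \<in> ballL (0,0) (int L) \<and> last ?q \<in> bdryL (0,0) (int m * int L)"
      using ne by (simp only: nn_path_tr hd_map last_map tr_ball tr_bdry) (simp add: tr_ball tr_bdry hd_map last_map)
    then have "(real m - 1) * real L * (r + \<delta>) \<le> path_weight (shiftw z \<omega>) ?q"
      using A unfolding A_event_def by blast
    then show "(real m - 1) * real L * (r + \<delta>) \<le> path_weight \<omega> p"
      using path_weight_tr[of \<omega> z ?q] pq by simp
  qed
qed

lemma finite_ballL: "finite (ballL z R)"
proof -
  have "ballL z R \<subseteq> {fst z - R..fst z + R} \<times> {snd z - R..snd z + R}"
    unfolding ballL_def l1dist_def by (auto simp: abs_le_iff)
  then show ?thesis by (rule finite_subset) simp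
qed

lemma finite_visited: "finite {z \<in> tiles L. visits p z L \<and> Q z}"
proof -
  have "{z \<in> tiles L. visits p z L \<and> Q z} \<subseteq> (\<Union>v\<in>set p. ballL v (int L))"
    unfolding visits_def ballL_def by (auto simp: l1dist_sym)
  then show ?thesis by (rule finite_subset) (simp add: finite_ballL)
qed

lemma visits_tile: "L \<ge> 1 \<Longrightarrow> t \<in> ta L ` set p \<Longrightarrow> visits p (center L t) L"
  unfolding visits_def using in_tile by blast



definition negset :: "(edge \<Rightarrow> real) set" where
  "negset = {\<omega>. \<exists>e. \<omega> e < 0}"


context
  fixes \<mu> :: "real measure"
  assumes P: "prob_space \<mu>" and S: "sets \<mu> = sets borel"
begin

lemma W_prob: "prob_space (weights \<mu>)"
  unfolding weights_def using P by (intro prob_space_PiM) auto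

lemma space_mu: "space \<mu> = UNIV"
  using sets_eq_imp_space_eq[OF S] by simp

lemma space_W: "space (weights \<mu>) = UNIV"
  unfolding weights_def by (simp add: space_PiM PiE_UNIV_domain space_mu)

lemma coord_meas: "(\<lambda>g. g e) \<in> borel_measurable (PiM E (\<lambda>_. \<mu>))" if "e \<in> E"
proof -
  have "(\<lambda>g. g e) \<in> measurable (PiM E (\<lambda>_. \<mu>)) \<mu>"
    using measurable_component_singleton[OF that, of "\<lambda>_. \<mu>"] by simp
  then show ?thesis using measurable_cong_sets[OF refl S] by blast
qed

lemma coord_measW: "(\<lambda>g. g e) \<in> borel_measurable (weights \<mu>)"
  unfolding weights_def by (rule coord_meas) simp

lemma pw_meas:
  assumes "\<And>k. Suc k < length p \<Longrightarrow> nn_edge (p!k) (p!Suc k) \<in> E"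
  shows "(\<lambda>g. path_weight g p) \<in> borel_measurable (PiM E (\<lambda>_. \<mu>))"
  unfolding path_weight_def
  by (intro borel_measurable_sum coord_meas) (use assms in auto)

lemma A_meas: "{\<omega> \<in> space (weights \<mu>). A_event r \<delta> L m z \<omega>} \<in> sets (weights \<mu>)"
proof -
  have "Measurable.pred (weights \<mu>) (\<lambda>\<omega>. \<forall>p. (nn_path p \<and> hd p \<in> ballL z (int L) \<and> last p \<in> bdryL z (int m * int L)) \<longrightarrow>
        (real m - 1) * real L * (r + \<delta>) \<le> path_weight \<omega> p)"
  proof (intro pred_intros_countable)
    fix p
    have "(\<lambda>g. path_weight g p) \<in> borel_measurable (weights \<mu>)"
      unfolding weights_def by (rule pw_meas) simp
    then show "Measurable.pred (weights \<mu>) (\<lambda>\<omega>. (nn_path p \<and> hd p \<in> ballL z (int L) \<and> last p \<in> bdryL z (int m * int L)) \<longrightarrow>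
        (real m - 1) * real L * (r + \<delta>) \<le> path_weight \<omega> p)"
      by measurable
  qed
  then show ?thesis unfolding A_event_def by simp
qed

lemma Aloc_meas: "Measurable.pred (PiM (Eloc R z) (\<lambda>_. \<mu>)) (Aloc c L R z)"
  unfolding Aloc_def
proof (intro pred_intros_countable)
  fix p
  show "Measurable.pred (PiM (Eloc R z) (\<lambda>_. \<mu>)) (\<lambda>\<omega>. nn_path p \<and> set p \<subseteq> ballL z R \<and> hd p \<in> ballL z L \<and> last p \<in> bdryL z R
      \<longrightarrow> c \<le> path_weight \<omega> p)"
  proof (cases "nn_path p \<and> set p \<subseteq> ballL z R")
    case True
    then have "(\<lambda>g. path_weight g p) \<in> borel_measurable (PiM (Eloc R z) (\<lambda>_. \<mu>))"
      by (intro pw_meas nn_edge_in_Eloc) auto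
    then show ?thesis by measurable
  next
    case False
    then have "(\<lambda>\<omega>::edge \<Rightarrow> real. nn_path p \<and> set p \<subseteq> ballL z R \<and> hd p \<in> ballL z L \<and> last p \<in> bdryL z R
      \<longrightarrow> c \<le> path_weight \<omega> p) = (\<lambda>\<omega>. True)" by auto
    then show ?thesis by simp
  qed
qed

lemma shift_meas: "(\<lambda>\<omega>. \<lambda>n\<in>UNIV. \<omega> (tr z (fst n), snd n)) \<in> measurable (weights \<mu>) (weights \<mu>)"
  unfolding weights_def
  by (intro measurable_restrict measurable_component_singleton) simp

lemma A_transl:
  "measure (weights \<mu>) {\<omega> \<in> space (weights \<mu>). A_event r \<delta> L m z \<omega>} =
   measure (weights \<mu>) {\<omega> \<in> space (weights \<mu>). A_event r \<delta> L m (0,0) \<omega>}"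
proof -
  let ?f = "\<lambda>e::edge. (tr z (fst e), snd e)"
  let ?s = "\<lambda>\<omega>. \<lambda>n\<in>UNIV. \<omega> (?f n)"
  have inj: "inj_on ?f UNIV"
    by (rule inj_onI) (auto simp: tr_def prod_eq_iff)
  have D: "distr (weights \<mu>) (weights \<mu>) ?s = weights \<mu>"
    unfolding weights_def using distr_PiM_reindex[of UNIV "\<lambda>_. \<mu>" ?f UNIV] P inj by simp
  have s_eq: "?s \<omega> = shiftw z \<omega>" for \<omega> by (simp add: shiftw_def fun_eq_iff)
  have pre: "?s -` {\<omega> \<in> space (weights \<mu>). A_event r \<delta> L m (0,0) \<omega>} \<inter> space (weights \<mu>) =
       {\<omega> \<in> space (weights \<mu>). A_event r \<delta> L m z \<omega>}"
    using A_shift[of r \<delta> L m z] s_eq by (auto simp: space_W)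
  have "measure (weights \<mu>) {\<omega> \<in> space (weights \<mu>). A_event r \<delta> L m (0,0) \<omega>} =
     measure (distr (weights \<mu>) (weights \<mu>) ?s) {\<omega> \<in> space (weights \<mu>). A_event r \<delta> L m (0,0) \<omega>}"
    using D by simp
  also have "\<dots> = measure (weights \<mu>) {\<omega> \<in> space (weights \<mu>). A_event r \<delta> L m z \<omega>}"
    using measure_distr[OF shift_meas A_meas] pre by simp
  finally show ?thesis by simp
qed

lemma negset_null:
  assumes "emeasure \<mu> {..<0} = 0"
  shows "negset \<in> null_sets (weights \<mu>)"
proof -
  have eq: "negset = (\<Union>e\<in>UNIV. {\<omega> \<in> space (weights \<mu>). \<omega> e < 0})"
    unfolding negset_def by (auto simp: space_W)
  have "{\<omega> \<in> space (weights \<mu>). \<omega> e < 0} \<in> null_sets (weights \<mu>)" for e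
  proof -
    have m: "(\<lambda>\<omega>. \<omega> e) \<in> measurable (weights \<mu>) \<mu>"
      unfolding weights_def by (rule measurable_component_singleton) simp
    have d: "distr (weights \<mu>) \<mu> (\<lambda>\<omega>. \<omega> e) = \<mu>"
      unfolding weights_def using distr_PiM_component[of UNIV "\<lambda>_. \<mu>" e] P by simp
    have sl: "{..<(0::real)} \<in> sets \<mu>" using S by simp
    have "emeasure (weights \<mu>) ((\<lambda>\<omega>. \<omega> e) -` {..<0} \<inter> space (weights \<mu>)) = emeasure \<mu> {..<0}"
      using emeasure_distr[OF m sl] d by simp
    moreover have "(\<lambda>\<omega>. \<omega> e) -` {..<0} \<inter> space (weights \<mu>) = {\<omega> \<in> space (weights \<mu>). \<omega> e < 0}"
      by auto
    moreover have "{\<omega> \<in> space (weights \<mu>). \<omega> e < 0} \<in> sets (weights \<mu>)"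
      using coord_measW[of e] by measurable
    ultimately show ?thesis using assms by (simp add: null_sets_def)
  qed
  then show ?thesis unfolding eq by (intro null_sets_UN') auto
qed

end


context
  fixes \<mu> :: "real measure"
  assumes P: "prob_space \<mu>" and S: "sets \<mu> = sets borel"
begin

lemma coords_indep: "prob_space.indep_vars (weights \<mu>) (\<lambda>_. \<mu>) (\<lambda>i \<omega>. \<omega> i) UNIV"
proof -
  interpret W: prob_space "weights \<mu>" by (rule W_prob[OF P S])
  have rv: "(\<lambda>\<omega>. \<omega> i) \<in> measurable (weights \<mu>) \<mu>" for i :: edge
    unfolding weights_def by (rule measurable_component_singleton) simp
  have d: "distr (weights \<mu>) \<mu> (\<lambda>\<omega>. \<omega> i) = \<mu>" for i :: edge
    unfolding weights_def using distr_PiM_component[of UNIV "\<lambda>_. \<mu>" i] P by simp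
  have r: "(\<lambda>x::edge \<Rightarrow> real. \<lambda>i\<in>UNIV. x i) = (\<lambda>x. x)" by (simp add: fun_eq_iff)
  show ?thesis
    by (subst W.indep_vars_iff_distr_eq_PiM) (auto simp: rv d r d[unfolded weights_def] weights_def)
qed

lemma indep_prod:
  fixes T :: "'i set" and E :: "'i \<Rightarrow> edge set" and SS :: "'i \<Rightarrow> (edge \<Rightarrow> real) set"
  assumes T: "finite T" "T \<noteq> {}" and dj: "disjoint_family_on E T"
    and SS: "\<And>t. t \<in> T \<Longrightarrow> SS t \<in> sets (PiM (E t) (\<lambda>_. \<mu>))"
  shows "measure (weights \<mu>) (\<Inter>t\<in>T. (\<lambda>\<omega>. restrict \<omega> (E t)) -` SS t \<inter> space (weights \<mu>)) =
    (\<Prod>t\<in>T. measure (weights \<mu>) ((\<lambda>\<omega>. restrict \<omega> (E t)) -` SS t \<inter> space (weights \<mu>)))"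
proof -
  interpret W: prob_space "weights \<mu>" by (rule W_prob[OF P S])
  have "W.indep_vars (\<lambda>t. PiM (E t) (\<lambda>_. \<mu>)) (\<lambda>t \<omega>. restrict (\<lambda>i. \<omega> i) (E t)) T"
    by (rule W.indep_vars_restrict[OF coords_indep _ dj]) auto
  from W.indep_varsD[OF this T(2) T(1) subset_refl SS] show ?thesis by simp
qed

lemma bad_prod:
  fixes T :: "'i set" and zc :: "'i \<Rightarrow> vtx"
  assumes T: "finite T" "T \<noteq> {}" and dj: "disjoint_family_on (\<lambda>t. Eloc R (zc t)) T"
  shows "measure (weights \<mu>) (\<Inter>t\<in>T. {\<omega>. \<not> Aloc c L R (zc t) \<omega>}) =
    (\<Prod>t\<in>T. measure (weights \<mu>) {\<omega>. \<not> Aloc c L R (zc t) \<omega>})"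
proof -
  define SS where "SS t = {g \<in> space (PiM (Eloc R (zc t)) (\<lambda>_. \<mu>)). \<not> Aloc c L R (zc t) g}" for t
  have SSm: "SS t \<in> sets (PiM (Eloc R (zc t)) (\<lambda>_. \<mu>))" for t
    unfolding SS_def using Aloc_meas[OF P S] by measurable
  have eq: "(\<lambda>\<omega>. restrict \<omega> (Eloc R (zc t))) -` SS t \<inter> space (weights \<mu>) = {\<omega>. \<not> Aloc c L R (zc t) \<omega>}" for t
    unfolding SS_def by (auto simp: space_W[OF P S] space_PiM space_mu[OF P S] Aloc_restrict)
  show ?thesis using indep_prod[OF T dj SSm] unfolding eq .
qed

lemma bad_meas: "{\<omega>. \<not> Aloc c L R z \<omega>} \<in> sets (weights \<mu>)"
proof -
  have "(\<lambda>\<omega>. restrict \<omega> (Eloc R z)) \<in> measurable (weights \<mu>) (PiM (Eloc R z) (\<lambda>_. \<mu>))"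
    unfolding weights_def by (rule measurable_restrict_subset) simp
  moreover have "Measurable.pred (PiM (Eloc R z) (\<lambda>_. \<mu>)) (\<lambda>g. \<not> Aloc c L R z g)"
    using Aloc_meas[OF P S] by measurable
  ultimately have "Measurable.pred (weights \<mu>) (\<lambda>\<omega>. \<not> Aloc c L R z (restrict \<omega> (Eloc R z)))"
    by measurable
  then have "Measurable.pred (weights \<mu>) (\<lambda>\<omega>. \<not> Aloc c L R z \<omega>)" by (simp add: Aloc_restrict)
  then have "{\<omega> \<in> space (weights \<mu>). \<not> Aloc c L R z \<omega>} \<in> sets (weights \<mu>)" by measurable
  then show ?thesis by (simp add: space_W[OF P S])
qed

end


definition col :: "nat \<Rightarrow> int \<times> int \<Rightarrow> int \<times> int" where
  "col m t = (fst t mod (int m + 1), snd t mod (int m + 1))"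

definition Cols :: "nat \<Rightarrow> (int \<times> int) set" where
  "Cols m = {0..<int m + 1} \<times> {0..<int m + 1}"

lemma finite_Cols: "finite (Cols m)"
  unfolding Cols_def by simp

lemma card_Cols: "card (Cols m) = (m + 1)^2"
proof -
  have "card {0..<int m + 1} = m + 1" by simp
  then show ?thesis unfolding Cols_def by (simp add: card_cartesian_product power2_eq_square)
qed

lemma col_in: "col m t \<in> Cols m"
proof -
  have "fst t mod (int m + 1) < int m + 1" by (rule pos_mod_bound) simp
  moreover have "snd t mod (int m + 1) < int m + 1" by (rule pos_mod_bound) simp
  moreover have "0 \<le> fst t mod (int m + 1)" "0 \<le> snd t mod (int m+1)" by simp_all
  ultimately show ?thesis unfolding col_def Cols_def mem_Times_iff atLeastLessThan_iff fst_conv snd_conv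
    by blast
qed

lemma center_dist: "l1dist (center L s) (center L t) = 2 * int L * kd s t"
proof -
  have "l1dist (center L s) (center L t) =
     max \<bar>2 * int L * (fst s - fst t)\<bar> \<bar>2 * int L * (snd s - snd t)\<bar>"
    unfolding l1dist_rot center_def by (simp add: algebra_simps)
  also have "\<dots> = 2 * int L * kd s t" unfolding kd_def
  proof -
    have gen: "max (c * a) (c * b) = c * max a b" if "c \<ge> 0" for a b c :: int
    proof (cases "a \<le> b")
      case True then show ?thesis using mult_left_mono[OF True that] by (simp add: max_def)
    next
      case False then have "b \<le> a" by simp
      then show ?thesis using mult_left_mono[OF \<open>b \<le> a\<close> that] False by (simp add: max_def)
    qed
    show "max \<bar>2 * int L * (fst s - fst t)\<bar> \<bar>2 * int L * (snd s - snd t)\<bar> =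
      2 * int L * max \<bar>fst s - fst t\<bar> \<bar>snd s - snd t\<bar>"
      using gen[of "2 * int L" "\<bar>fst s - fst t\<bar>" "\<bar>snd s - snd t\<bar>"] by (simp add: abs_mult)
  qed
  finally show ?thesis .
qed

lemma mod_far:
  fixes a b M :: int assumes "a mod M = b mod M" "a \<noteq> b" "M > 0"
  shows "M \<le> \<bar>a - b\<bar>"
proof -
  have "M dvd a - b" using assms(1) mod_eq_dvd_iff by blast
  then show ?thesis using dvd_imp_le_int[of "a - b" M] assms by simp
qed

lemma Eloc_disj:
  assumes L: "L \<ge> 1" and ne: "s \<noteq> t" and c: "col m s = col m t"
  shows "Eloc (int m * int L) (center L s) \<inter> Eloc (int m * int L) (center L t) = {}"
proof (rule ccontr)
  assume "Eloc (int m * int L) (center L s) \<inter> Eloc (int m * int L) (center L t) \<noteq> {}"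
  then obtain e where e: "e \<in> Eloc (int m * int L) (center L s)" "e \<in> Eloc (int m * int L) (center L t)" by blast
  have "l1dist (fst e) (center L s) \<le> int m * int L" "l1dist (fst e) (center L t) \<le> int m * int L"
    using Eloc_base[OF e(1)] Eloc_base[OF e(2)] unfolding ballL_def by auto
  then have "l1dist (center L s) (center L t) \<le> 2 * (int m * int L)"
    using l1dist_tri[of "center L s" "center L t" "fst e"] l1dist_sym[of "center L s" "fst e"] by linarith
  then have k: "2 * int L * kd s t \<le> 2 * int L * int m" unfolding center_dist by (simp add: algebra_simps)
  have "int m + 1 \<le> kd s t"
  proof (cases "fst s = fst t")
    case True
    then have "snd s \<noteq> snd t" using ne by (simp add: prod_eq_iff)
    moreover have "snd s mod (int m + 1) = snd t mod (int m + 1)" using c unfolding col_def by simp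
    ultimately have "int m + 1 \<le> \<bar>snd s - snd t\<bar>" by (intro mod_far) auto
    then show ?thesis unfolding kd_def by simp
  next
    case False
    moreover have "fst s mod (int m + 1) = fst t mod (int m + 1)" using c unfolding col_def by simp
    ultimately have "int m + 1 \<le> \<bar>fst s - fst t\<bar>" by (intro mod_far) auto
    then show ?thesis unfolding kd_def by simp
  qed
  then have "2 * int L * (int m + 1) \<le> 2 * int L * kd s t" using L by (intro mult_left_mono) auto
  moreover have "int L * kd s t \<le> int L * int m" using k by simp
  ultimately show False using L by (simp add: algebra_simps)
qed

lemma pigeon:
  assumes "finite B"
  shows "\<exists>k\<in>Cols m. card B \<le> (m+1)^2 * card {t\<in>B. col m t = k}"
proof (rule ccontr)
  assume "\<not> ?thesis"
  then have lt: "(m+1)^2 * card {t\<in>B. col m t = k} < card B" if "k \<in> Cols m" for k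
    using that by auto
  have "B = (\<Union>k\<in>Cols m. {t\<in>B. col m t = k})" using col_in by blast
  then have "card B \<le> (\<Sum>k\<in>Cols m. card {t\<in>B. col m t = k})"
    using card_UN_le[OF finite_Cols, of "\<lambda>k. {t\<in>B. col m t = k}" m] by simp
  then have "(m+1)^2 * card B \<le> (m+1)^2 * (\<Sum>k\<in>Cols m. card {t\<in>B. col m t = k})"
    by (rule mult_le_mono2)
  then have "(m+1)^2 * card B \<le> (\<Sum>k\<in>Cols m. (m+1)^2 * card {t\<in>B. col m t = k})"
    by (simp only: sum_distrib_left)
  also have "\<dots> < (\<Sum>k\<in>Cols m. card B)"
  proof (rule sum_strict_mono[OF finite_Cols])
    show "Cols m \<noteq> {}" using col_in by blast
  qed (rule lt)
  also have "\<dots> = (m+1)^2 * card B" using card_Cols by simp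
  finally show False by simp
qed

context
  fixes \<mu> :: "real measure"
  assumes P: "prob_space \<mu>" and S: "sets \<mu> = sets borel"
begin

lemma per_B:
  fixes B :: "(int \<times> int) set" and c :: real
  assumes L: "L \<ge> 1" and B: "finite B" "B \<noteq> {}" "n \<le> 2 * card B"
    and small: "\<And>t. measure (weights \<mu>) {\<omega>. \<not> Aloc c (int L) (int m * int L) (center L t) \<omega>}
                   \<le> (1/36) ^ (2 * (m+1)^2)"
  shows "measure (weights \<mu>) (\<Inter>t\<in>B. {\<omega>. \<not> Aloc c (int L) (int m * int L) (center L t) \<omega>}) \<le> (1/36) ^ n"
proof -
  interpret W: prob_space "weights \<mu>" by (rule W_prob[OF P S])
  let ?bad = "\<lambda>t. {\<omega>. \<not> Aloc c (int L) (int m * int L) (center L t) \<omega>}"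
  let ?K = "(m+1)^2"
  obtain k where k: "card B \<le> ?K * card {t\<in>B. col m t = k}" using pigeon[OF B(1)] by blast
  define Bk where "Bk = {t\<in>B. col m t = k}"
  have fBk: "finite Bk" unfolding Bk_def using B by simp
  have neBk: "Bk \<noteq> {}" using k B unfolding Bk_def by (intro notI) (simp add: card_gt_0_iff)
  have sub: "(\<Inter>t\<in>B. ?bad t) \<subseteq> (\<Inter>t\<in>Bk. ?bad t)" unfolding Bk_def by auto
  have mBk: "(\<Inter>t\<in>Bk. ?bad t) \<in> sets (weights \<mu>)"
    using fBk neBk by (intro sets.finite_INT bad_meas[OF P S]) auto
  have dj: "disjoint_family_on (\<lambda>t. Eloc (int m * int L) (center L t)) Bk"
    unfolding disjoint_family_on_def Bk_def using Eloc_disj[OF L] by auto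
  have "measure (weights \<mu>) (\<Inter>t\<in>B. ?bad t) \<le> measure (weights \<mu>) (\<Inter>t\<in>Bk. ?bad t)"
    by (rule W.finite_measure_mono[OF sub mBk])
  also have "\<dots> = (\<Prod>t\<in>Bk. measure (weights \<mu>) (?bad t))"
    by (rule bad_prod[OF P S fBk neBk dj])
  also have "\<dots> \<le> (\<Prod>t\<in>Bk. (1/36) ^ (2 * ?K))"
  proof (rule prod_mono)
    fix t assume "t \<in> Bk"
    show "0 \<le> measure (weights \<mu>) (?bad t) \<and> measure (weights \<mu>) (?bad t) \<le> (1/36) ^ (2 * ?K)"
      using small[of t] by simp
  qed
  also have "\<dots> = (1/36) ^ (2 * ?K * card Bk)" by (simp add: power_mult)
  also have "\<dots> \<le> (1/36) ^ n"
  proof (rule power_decreasing)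
    have "n \<le> 2 * card B" by (rule B(3))
    also have "\<dots> \<le> 2 * (?K * card Bk)" using k unfolding Bk_def by simp
    finally show "n \<le> 2 * ?K * card Bk" by (simp add: mult.assoc)
  qed auto
  finally show ?thesis .
qed

end


context
  fixes \<mu> :: "real measure"
  assumes P: "prob_space \<mu>" and S: "sets \<mu> = sets borel"
begin

lemma mainL:
  fixes r \<delta> :: real and L m :: nat and x y :: vtx
  assumes L: "L \<ge> 1" and m: "m \<ge> 2" and neg: "emeasure \<mu> {..<0} = 0"
    and good0: "1 - (1/36)^(2*(m+1)^2) < measure (weights \<mu>) {\<omega> \<in> space (weights \<mu>). A_event r \<delta> L m (0,0) \<omega>}"
  shows "measure (weights \<mu>) {\<omega> \<in> space (weights \<mu>). \<exists>p. nn_path p \<and> hd p = x \<and> last p = y \<and>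
           real (card {z \<in> tiles L. visits p z L \<and> A_event r \<delta> L m z \<omega>})
             \<le> (1 / (8 * real L)) * real_of_int (l1dist x y)}
    \<le> (1/2) ^ (nat \<lceil>real_of_int (l1dist x y) / (2 * real L)\<rceil>)"
    (is "measure _ ?Ev \<le> _")
proof -
  interpret W: prob_space "weights \<mu>" by (rule W_prob[OF P S])
  define d where "d = l1dist x y"
  define n where "n = nat \<lceil>real_of_int d / (2 * real L)\<rceil>"
  define c where "c = (real m - 1) * real L * (r + \<delta>)"
  define bad where "bad t = {\<omega>. \<not> Aloc c (int L) (int m * int L) (center L t) \<omega>}" for t
  let ?\<epsilon> = "(1/36::real)^(2*(m+1)^2)"
  have nge: "real_of_int d / (2 * real L) \<le> real n" unfolding n_def by (rule real_nat_ceiling_ge)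
  have small: "measure (weights \<mu>) (bad t) \<le> ?\<epsilon>" for t
  proof -
    let ?A = "{\<omega> \<in> space (weights \<mu>). A_event r \<delta> L m (center L t) \<omega>}"
    have sub: "bad t \<subseteq> space (weights \<mu>) - ?A"
      unfolding bad_def c_def using A_imp_Aloc[of r \<delta> L m "center L t"] by (auto simp: space_W[OF P S])
    have "measure (weights \<mu>) (bad t) \<le> measure (weights \<mu>) (space (weights \<mu>) - ?A)"
      by (rule W.finite_measure_mono[OF sub]) (simp add: A_meas[OF P S] sets.compl_sets)
    also have "\<dots> = 1 - measure (weights \<mu>) ?A" by (rule W.prob_compl[OF A_meas[OF P S]])
    also have "measure (weights \<mu>) ?A = measure (weights \<mu>) {\<omega> \<in> space (weights \<mu>). A_event r \<delta> L m (0,0) \<omega>}"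
      by (rule A_transl[OF P S])
    finally show ?thesis using good0 by simp
  qed
  show ?thesis
  proof (cases "n = 0")
    case True
    then show ?thesis unfolding n_def[symmetric] d_def[symmetric] by simp
  next
    case False
    then have n1: "n \<ge> 1" by simp
    define Wd where "Wd = {w. length w = n \<and> hd w = ta L x \<and> successively king_adj w \<and> distinct w}"
    define Bs where "Bs w = {B. B \<subseteq> set w \<and> n \<le> 2 * card B}" for w :: "(int \<times> int) list"
    define U where "U = (\<Union>w\<in>Wd. \<Union>B\<in>Bs w. \<Inter>t\<in>B. bad t)"
    have finWd: "finite Wd" unfolding Wd_def
      by (rule finite_subset[OF _ card_chains(1)[OF n1, of "ta L x"]]) auto
    have finBs: "finite (Bs w)" for w unfolding Bs_def by (rule finite_subset[of _ "Pow (set w)"]) auto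
    have Bne: "B \<noteq> {}" if "B \<in> Bs w" for B w using that n1 unfolding Bs_def by auto
    have Bfin: "finite B" if "B \<in> Bs w" for B w using that unfolding Bs_def by (auto intro: finite_subset)
    have mI: "(\<Inter>t\<in>B. bad t) \<in> sets (weights \<mu>)" if "B \<in> Bs w" for B w
      using Bne[OF that] Bfin[OF that] unfolding bad_def by (intro sets.finite_INT bad_meas[OF P S]) auto
    have mUw: "(\<Union>B\<in>Bs w. \<Inter>t\<in>B. bad t) \<in> sets (weights \<mu>)" for w
      using finBs mI by (intro sets.finite_UN) auto
    have mU: "U \<in> sets (weights \<mu>)" unfolding U_def by (rule sets.finite_UN[OF finWd]) (rule mUw)
    have negn: "negset \<in> null_sets (weights \<mu>)" by (rule negset_null[OF P S neg])
    have incl: "?Ev \<subseteq> U \<union> negset"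
    proof
      fix \<omega> assume "\<omega> \<in> ?Ev"
      then obtain p where p: "nn_path p" "hd p = x" "last p = y"
        and cardp: "real (card {z \<in> tiles L. visits p z L \<and> A_event r \<delta> L m z \<omega>}) \<le> (1 / (8 * real L)) * real_of_int d"
        unfolding d_def by blast
      show "\<omega> \<in> U \<union> negset"
      proof (cases "\<omega> \<in> negset")
        case True then show ?thesis by simp
      next
        case False
        then have nn: "\<forall>e. \<omega> e \<ge> 0" by (auto simp: negset_def not_less)
        have pne: "p \<noteq> []" using p(1) unfolding nn_path_def by simp
        have ch0: "successively king_adj (map (ta L) p)" by (rule nn_path_chain[OF L p(1)])
        obtain w where w: "successively king_adj w" "w \<noteq> []" "hd w = ta L x" "last w = ta L y"
          "set w \<subseteq> ta L ` set p" "distinct w"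
          using shortest_chain[OF ch0] pne p by (auto simp: hd_map last_map)
        have kdl: "kd (ta L x) (ta L y) \<le> int (length w) - 1" using kd_chain[OF w(1,2)] w(3,4) by simp
        have "2 * int L * kd (ta L x) (ta L y) \<le> 2 * int L * (int (length w) - 1)"
          by (rule mult_left_mono[OF kdl]) simp
        moreover have "d \<le> 2 * int L * kd (ta L x) (ta L y) + 2 * int L"
          using dist_tiles[OF L, of x y] unfolding d_def .
        ultimately have "d \<le> 2 * int L * (int (length w) - 1) + 2 * int L" by linarith
        then have dl: "d \<le> 2 * int L * int (length w)" by (simp add: algebra_simps)
        have "real_of_int d \<le> real_of_int (2 * int L * int (length w))"
          using dl by (simp only: of_int_le_iff)
        then have "real_of_int d \<le> 2 * real L * real (length w)" by simp
        then have "real_of_int d / (2 * real L) \<le> real (length w)" using L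
          by (simp add: divide_le_eq mult.commute)
        then have nlen: "n \<le> length w" unfolding n_def by simp
        define w' where "w' = take n w"
        have "length w' = n" unfolding w'_def using nlen by simp
        moreover have "hd w' = ta L x" unfolding w'_def using n1 w(3) by simp
        moreover have "successively king_adj w'" unfolding w'_def by (rule successively_take[OF w(1)])
        moreover have "distinct w'" unfolding w'_def using w(6) by simp
        ultimately have w'Wd: "w' \<in> Wd" unfolding Wd_def by blast
        have "set w' \<subseteq> set w" unfolding w'_def by (rule set_take_subset)
        then have setw': "set w' \<subseteq> ta L ` set p" using w(5) by (rule subset_trans)
        have cw': "card (set w') = n" using w'Wd unfolding Wd_def by (simp add: distinct_card)
        define G where "G = {t \<in> set w'. A_event r \<delta> L m (center L t) \<omega>}"
        define Bb where "Bb = {t \<in> set w'. \<not> A_event r \<delta> L m (center L t) \<omega>}"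
        have "center L ` G \<subseteq> {z \<in> tiles L. visits p z L \<and> A_event r \<delta> L m z \<omega>}"
        proof
          fix z assume "z \<in> center L ` G"
          then obtain t where t: "t \<in> G" "z = center L t" by blast
          then have "t \<in> ta L ` set p" using setw' unfolding G_def by auto
          then have "visits p (center L t) L" by (rule visits_tile[OF L])
          moreover have "A_event r \<delta> L m (center L t) \<omega>" using t(1) unfolding G_def by simp
          ultimately show "z \<in> {z \<in> tiles L. visits p z L \<and> A_event r \<delta> L m z \<omega>}"
            using t(2) center_tiles by simp
        qed
        then have "card (center L ` G) \<le> card {z \<in> tiles L. visits p z L \<and> A_event r \<delta> L m z \<omega>}"
          by (rule card_mono[OF finite_visited])
        moreover have "card (center L ` G) = card G"
          using center_inj[OF L] by (simp add: card_image inj_on_subset)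
        ultimately have "real (card G) \<le> (1 / (8 * real L)) * real_of_int d" using cardp by linarith
        also have "\<dots> = (real_of_int d / (2 * real L)) / 4" by (simp add: field_simps)
        also have "\<dots> \<le> real n / 4" using nge by simp
        finally have cG: "real (card G) \<le> real n / 4" .
        have GB: "set w' = G \<union> Bb" "G \<inter> Bb = {}" unfolding G_def Bb_def by auto
        have "finite G" "finite Bb" unfolding G_def Bb_def by simp_all
        then have "card (G \<union> Bb) = card G + card Bb" using GB(2) by (rule card_Un_disjoint)
        then have "card G + card Bb = card (set w')" using GB(1) by simp
        then have "card G + card Bb = n" using cw' by simp
        then have "n \<le> 2 * card Bb" using cG by linarith
        then have BbBs: "Bb \<in> Bs w'" unfolding Bs_def Bb_def by auto
        have "\<omega> \<in> (\<Inter>t\<in>Bb. bad t)"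
        proof
          fix t assume "t \<in> Bb"
          then have "\<not> A_event r \<delta> L m (center L t) \<omega>" unfolding Bb_def by simp
          then show "\<omega> \<in> bad t" unfolding bad_def c_def using Aloc_imp_A[OF nn m L] by blast
        qed
        then have "\<omega> \<in> U" unfolding U_def using w'Wd BbBs by blast
        then show ?thesis by simp
      qed
    qed
    have "measure (weights \<mu>) ?Ev \<le> measure (weights \<mu>) (U \<union> negset)"
      by (rule W.finite_measure_mono[OF incl]) (use mU negn in auto)
    also have "\<dots> = measure (weights \<mu>) U" by (rule measure_Un_null_set[OF mU negn])
    also have "\<dots> \<le> (\<Sum>w\<in>Wd. measure (weights \<mu>) (\<Union>B\<in>Bs w. \<Inter>t\<in>B. bad t))"
      unfolding U_def by (rule measure_UNION_le[OF finWd mUw])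
    also have "\<dots> \<le> (\<Sum>w\<in>Wd. 2^n * (1/36)^n)"
    proof (rule sum_mono)
      fix w assume wW: "w \<in> Wd"
      have "measure (weights \<mu>) (\<Union>B\<in>Bs w. \<Inter>t\<in>B. bad t) \<le> (\<Sum>B\<in>Bs w. measure (weights \<mu>) (\<Inter>t\<in>B. bad t))"
        by (rule measure_UNION_le[OF finBs mI])
      also have "\<dots> \<le> (\<Sum>B\<in>Bs w. (1/36)^n)"
      proof (rule sum_mono)
        fix B assume B: "B \<in> Bs w"
        show "measure (weights \<mu>) (\<Inter>t\<in>B. bad t) \<le> (1/36)^n"
          unfolding bad_def
          by (rule per_B[OF P S L Bfin[OF B] Bne[OF B]]) (use B small in \<open>auto simp: Bs_def bad_def\<close>)
      qed
      also have "\<dots> = real (card (Bs w)) * (1/36)^n" by simp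
      also have "\<dots> \<le> 2^n * (1/36)^n"
      proof -
        have "card (Bs w) \<le> card (Pow (set w))" unfolding Bs_def by (rule card_mono) auto
        also have "\<dots> = 2 ^ n" using wW unfolding Wd_def by (simp add: card_Pow distinct_card)
        finally have "real (card (Bs w)) \<le> 2 ^ n" by (metis of_nat_le_iff of_nat_numeral of_nat_power)
        then show ?thesis by (simp add: mult_right_mono)
      qed
      finally show "measure (weights \<mu>) (\<Union>B\<in>Bs w. \<Inter>t\<in>B. bad t) \<le> 2^n * (1/36)^n" .
    qed
    also have "\<dots> = real (card Wd) * (2^n * (1/36)^n)" by simp
    also have "\<dots> \<le> 9^n * (2^n * (1/36)^n)"
    proof -
      have "card Wd \<le> card {w. length w = n \<and> hd w = ta L x \<and> successively king_adj w}"
        unfolding Wd_def by (rule card_mono[OF card_chains(1)[OF n1]]) auto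
      also have "\<dots> \<le> 9^(n-1)" by (rule card_chains(2)[OF n1])
      also have "\<dots> \<le> 9^n" by (simp add: power_increasing)
      finally have "real (card Wd) \<le> 9^n" by (metis of_nat_le_iff of_nat_numeral of_nat_power)
      then show ?thesis by (simp add: mult_right_mono)
    qed
    also have "\<dots> = (9 * 2 * (1/36))^n" by (simp only: power_mult_distrib mult.assoc)
    also have "\<dots> = (1/2)^n" by simp
    finally show ?thesis unfolding n_def d_def .
  qed
qed

end


lemma half_pow_exp:
  fixes L :: nat and d :: real
  assumes "L \<ge> 1"
  shows "(1/2::real) ^ (nat \<lceil>d / (2 * real L)\<rceil>) \<le> exp (- (ln 2 / (2 * real L)) * d)"
proof -
  let ?n = "nat \<lceil>d / (2 * real L)\<rceil>"
  have nge: "d / (2 * real L) \<le> real ?n" by (rule real_nat_ceiling_ge)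
  have "(1/2::real) ^ ?n = exp (- (real ?n * ln 2))"
  proof -
    have "exp (real ?n * ln 2) = 2 ^ ?n" by (simp add: exp_of_nat_mult)
    then show ?thesis by (simp add: exp_minus power_one_over inverse_eq_divide)
  qed
  also have "\<dots> \<le> exp (- (ln 2 / (2 * real L)) * d)"
  proof -
    have "(ln 2 / (2 * real L)) * d = (d / (2 * real L)) * ln 2" by simp
    also have "\<dots> \<le> real ?n * ln 2" using nge by (intro mult_right_mono) auto
    finally show ?thesis by simp
  qed
  finally show ?thesis .
qed

theorem lemmaA2:
  fixes \<mu> :: "real measure" and \<delta> :: real
  assumes "prob_space \<mu>" and "sets \<mu> = sets borel"
    and "emeasure \<mu> {..<0} = 0"
    and "Fdist \<mu> 0 < 1/2"
    and "Fdist \<mu> (r_min \<mu>) < pc_oriented"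
    and "\<delta> > 0"
    and "\<forall>m\<ge>2. \<forall>z. ((\<lambda>L. measure (weights \<mu>)
            {\<omega> \<in> space (weights \<mu>). A_event (r_min \<mu>) \<delta> L m z \<omega>}) \<longlongrightarrow> 1) sequentially"
  shows "\<forall>m\<ge>2. \<forall>\<^sub>F L in sequentially. L \<ge> 1 \<and>
    (\<exists>\<theta>>0. \<exists>\<gamma>>0. \<exists>C::real. \<forall>x y.
      measure (weights \<mu>)
        {\<omega> \<in> space (weights \<mu>). \<exists>p. nn_path p \<and> hd p = x \<and> last p = y \<and>
           real (card {z \<in> tiles L. visits p z L \<and> A_event (r_min \<mu>) \<delta> L m z \<omega>})
             \<le> \<theta> * real_of_int (l1dist x y)}
      < C * exp (- \<gamma> * real_of_int (l1dist x y)))"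
proof (intro allI impI)
  fix m :: nat assume m: "m \<ge> 2"
  let ?\<epsilon> = "(1/36::real)^(2*(m+1)^2)"
  have "?\<epsilon> > 0" by simp
  then have lt: "1 - ?\<epsilon> < 1" by simp
  have ev1: "\<forall>\<^sub>F L in sequentially. 1 - ?\<epsilon> < measure (weights \<mu>)
            {\<omega> \<in> space (weights \<mu>). A_event (r_min \<mu>) \<delta> L m (0,0) \<omega>}"
    using order_tendstoD(1)[OF assms(7)[rule_format, OF m, of "(0,0)"] lt] .
  have ev2: "\<forall>\<^sub>F L in sequentially. (1::nat) \<le> L" by (rule eventually_ge_at_top)
  show "\<forall>\<^sub>F L in sequentially. L \<ge> 1 \<and>
    (\<exists>\<theta>>0. \<exists>\<gamma>>0. \<exists>C::real. \<forall>x y.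
      measure (weights \<mu>)
        {\<omega> \<in> space (weights \<mu>). \<exists>p. nn_path p \<and> hd p = x \<and> last p = y \<and>
           real (card {z \<in> tiles L. visits p z L \<and> A_event (r_min \<mu>) \<delta> L m z \<omega>})
             \<le> \<theta> * real_of_int (l1dist x y)}
      < C * exp (- \<gamma> * real_of_int (l1dist x y)))"
    using ev1 ev2
  proof eventually_elim
    case (elim L)
    have L: "L \<ge> 1" using elim(2) by simp
    have th: "1 / (8 * real L) > 0" using L by simp
    have ga: "ln 2 / (2 * real L) > 0" using L by simp
    have "\<forall>x y. measure (weights \<mu>)
        {\<omega> \<in> space (weights \<mu>). \<exists>p. nn_path p \<and> hd p = x \<and> last p = y \<and>
           real (card {z \<in> tiles L. visits p z L \<and> A_event (r_min \<mu>) \<delta> L m z \<omega>})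
             \<le> (1 / (8 * real L)) * real_of_int (l1dist x y)}
      < 2 * exp (- (ln 2 / (2 * real L)) * real_of_int (l1dist x y))"
    proof (intro allI)
      fix x y :: vtx
      have "measure (weights \<mu>)
        {\<omega> \<in> space (weights \<mu>). \<exists>p. nn_path p \<and> hd p = x \<and> last p = y \<and>
           real (card {z \<in> tiles L. visits p z L \<and> A_event (r_min \<mu>) \<delta> L m z \<omega>})
             \<le> (1 / (8 * real L)) * real_of_int (l1dist x y)}
         \<le> (1/2) ^ (nat \<lceil>real_of_int (l1dist x y) / (2 * real L)\<rceil>)"
        by (rule mainL[OF assms(1,2) L m assms(3) elim(1)])
      also have "\<dots> \<le> exp (- (ln 2 / (2 * real L)) * real_of_int (l1dist x y))"
        by (rule half_pow_exp[OF L])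
      also have "\<dots> < 2 * exp (- (ln 2 / (2 * real L)) * real_of_int (l1dist x y))" by simp
      finally show "measure (weights \<mu>)
        {\<omega> \<in> space (weights \<mu>). \<exists>p. nn_path p \<and> hd p = x \<and> last p = y \<and>
           real (card {z \<in> tiles L. visits p z L \<and> A_event (r_min \<mu>) \<delta> L m z \<omega>})
             \<le> (1 / (8 * real L)) * real_of_int (l1dist x y)}
      < 2 * exp (- (ln 2 / (2 * real L)) * real_of_int (l1dist x y))" .
    qed
    then show ?case using L th ga by blast
  qed
qed


end
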